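(* Impose (A1)–(A6), (A8) and (A10), and suppose $\mathcal Y^*=\mathbb R$. Then for every $\epsilon>0$, $\bar u\in[0,1]$, $\bar x\in\mathcal X$ and $\delta\in\mathbb R$ there exist random variables $(\tilde Y_0^*,\tilde Y_1^*,\tilde U,\tilde V)$, defined jointly with $(Z,X)$, such that (1) $\mathbb E[\tilde Y_1^*-\tilde Y_0^*\mid X=\bar x,\tilde U=\bar u,\tilde S_0=1,\tilde S_1=1]=\delta$; (2) $\mathbb P[(\tilde Y_0^*,\tilde Y_1^*,\tilde V)\in\mathcal Y^*\times\mathcal Y^*\times[0,1]\mid X=\bar x,\tilde U=u]=1$ for every $u\in[0,1]$; (3) $F_{\tilde V\mid X,\tilde U}$ is a continuous function of the value of $\tilde U$; (4) $F_{\tilde Y_0^*,\tilde Y_1^*\mid X,\tilde U,\tilde V}$ is a continuous function of the value of $\tilde U$; (5) $|F_{\tilde Y,\tilde D,\tilde S,Z,X}(y,d,s,z,\bar x)-F_{Y,D,S,Z,X}(y,d,s,z,\bar x)|\le\epsilon$ for all $(y,d,s,z)\in\mathbb R^4$.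
   Context: Standing setup. On a common probability space: $X$ (covariates, support $\mathcal X$), $Z$ (instrument, support $\mathcal Z$), $W=(X,Z)$; latent real random variables $U,V$, jointly continuously distributed conditional on $X$, with $U\mid X$ and $V\mid X$ each Uniform$[0,1]$ (their joint dependence unrestricted); real potential outcomes of interest $Y_0^*,Y_1^*$. Given functions $P:\mathcal X\times\mathcal Z\to[0,1]$ and $Q:\{0,1\}\times\mathcal X\to[0,1]$, define the treatment $D=\mathbf 1\{P(W)\ge U\}$, potential selection indicators $S_d=\mathbf 1\{Q(d,X)\ge V\}$ ($d\in\{0,1\}$), selection indicator $S=DS_1+(1-D)S_0$, potential observable outcomes $Y_d=S_dY_d^*$ and observable outcome $Y=DY_1+(1-D)Y_0$. For $x\in\mathcal X$, $u\in[0,1]$, $d\in\{0,1\}$: $m_d^Y(x,u)=\mathbb E[Y_d\mid X=x,U=u]$, $m_d^S(x,u)=\mathbb E[S_d\mid X=x,U=u]$, $\Delta_S=m_1^S-m_0^S$. The functions $m_0^Y,m_1^Y,m_0^S,\Delta_S$ are assumed point identified at every $(x,u)$; ratios of them are assumed well defined. Assumptions: (A1) $Z$ is independent of $(U,V,Y_0^*,Y_1^* )$ conditional on $X$; (A2) the distribution of $P(W)$ given $X$ is nondegenerate; (A3) $\mathbb E|Y_d^*|<\infty$ and $\mathbb E[(Y_d^* )^2]<\infty$; (A4) $0<\mathbb P[D=1\mid X]<1$; (A5) $X$ is invariant to counterfactual manipulation of treatment; (A6) $Y_0^*,Y_1^*$ have a common support $\mathcal Y^*\subseteq\mathbb R$;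 (A8) $Q(1,x)>Q(0,x)>0$ for all $x\in\mathcal X$; (A10) the conditional cdfs $F_{V\mid X,U}$ and $F_{Y_0^*,Y_1^*\mid X,U,V}$ are continuous functions of the value of $U$. Candidate construction: given $(\tilde Y_0^*,\tilde Y_1^*,\tilde U,\tilde V)$, set $\tilde D=\mathbf 1\{P(X,Z)\ge\tilde U\}$, $\tilde S_d=\mathbf 1\{Q(d,X)\ge\tilde V\}$, $\tilde S=\tilde D\tilde S_1+(1-\tilde D)\tilde S_0$, $\tilde Y_d=\tilde S_d\tilde Y_d^*$, $\tilde Y=\tilde D\tilde Y_1+(1-\tilde D)\tilde Y_0$. $F$ with subscripts denotes a (conditional) joint cumulative distribution function. *)

theory Defs
  imports "HOL-Probability.Probability"
begin

text \<open>
Everything is described conditionally on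
the covariate value x.  Given X = x:
  Z has law muZ x;  U is Uniform[0,1] and independent of Z (assumption A1 and
  the normalisation of U); V given (X = x, U = u) has law kV x u;
  (Y0*, Y1*) given (X = x, U = u, V = v) has law kY x u v.
A point of the outcome space is (z, u, v, y0s, y1s).
\<close>

definition unif01 :: "real measure" where
  "unif01 = uniform_measure lborel {0..1}"

definition lawVY ::
  "('x \<Rightarrow> real \<Rightarrow> real measure) \<Rightarrow> ('x \<Rightarrow> real \<Rightarrow> real \<Rightarrow> (real \<times> real) measure)
   \<Rightarrow> 'x \<Rightarrow> real \<Rightarrow> (real \<times> (real \<times> real)) measure" where
  "lawVY kV kY x u = kV x u \<bind> (\<lambda>v. kY x u v \<bind> (\<lambda>y. return borel (v, y)))"

definition lawX ::
  "('x \<Rightarrow> real measure) \<Rightarrow> ('x \<Rightarrow> real \<Rightarrow> real measure)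
   \<Rightarrow> ('x \<Rightarrow> real \<Rightarrow> real \<Rightarrow> (real \<times> real) measure)
   \<Rightarrow> 'x \<Rightarrow> (real \<times> real \<times> real \<times> real \<times> real) measure" where
  "lawX muZ kV kY x =
     muZ x \<bind> (\<lambda>z. unif01 \<bind> (\<lambda>u. lawVY kV kY x u \<bind>
        (\<lambda>(v, y0, y1). return borel (z, u, v, y0, y1))))"

definition Zof :: "real \<times> real \<times> real \<times> real \<times> real \<Rightarrow> real" where
  "Zof w = fst w"
definition Uof :: "real \<times> real \<times> real \<times> real \<times> real \<Rightarrow> real" where
  "Uof w = fst (snd w)"
definition Vof :: "real \<times> real \<times> real \<times> real \<times> real \<Rightarrow> real" where
  "Vof w = fst (snd (snd w))"
definition Ystar :: "nat \<Rightarrow> real \<times> real \<times> real \<times> real \<times> real \<Rightarrow> real" where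
  "Ystar d w = (if d = 1 then snd (snd (snd (snd w))) else fst (snd (snd (snd w))))"

definition Dobs :: "('x \<Rightarrow> real \<Rightarrow> real) \<Rightarrow> 'x \<Rightarrow> real \<times> real \<times> real \<times> real \<times> real \<Rightarrow> real" where
  "Dobs P x w = (if P x (Zof w) \<ge> Uof w then 1 else 0)"
definition Sd :: "(nat \<Rightarrow> 'x \<Rightarrow> real) \<Rightarrow> nat \<Rightarrow> 'x \<Rightarrow> real \<times> real \<times> real \<times> real \<times> real \<Rightarrow> real" where
  "Sd Q d x w = (if Q d x \<ge> Vof w then 1 else 0)"
definition Sobs :: "('x \<Rightarrow> real \<Rightarrow> real) \<Rightarrow> (nat \<Rightarrow> 'x \<Rightarrow> real) \<Rightarrow> 'x \<Rightarrow> real \<times> real \<times> real \<times> real \<times> real \<Rightarrow> real" where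
  "Sobs P Q x w = Dobs P x w * Sd Q 1 x w + (1 - Dobs P x w) * Sd Q 0 x w"
definition Yd :: "(nat \<Rightarrow> 'x \<Rightarrow> real) \<Rightarrow> nat \<Rightarrow> 'x \<Rightarrow> real \<times> real \<times> real \<times> real \<times> real \<Rightarrow> real" where
  "Yd Q d x w = Sd Q d x w * Ystar d w"
definition Yobs :: "('x \<Rightarrow> real \<Rightarrow> real) \<Rightarrow> (nat \<Rightarrow> 'x \<Rightarrow> real) \<Rightarrow> 'x \<Rightarrow> real \<times> real \<times> real \<times> real \<times> real \<Rightarrow> real" where
  "Yobs P Q x w = Dobs P x w * Yd Q 1 x w + (1 - Dobs P x w) * Yd Q 0 x w"

definition cdfYDSZ ::
  "('x \<Rightarrow> real \<Rightarrow> real) \<Rightarrow> (nat \<Rightarrow> 'x \<Rightarrow> real) \<Rightarrow> ('x \<Rightarrow> real measure) \<Rightarrow> ('x \<Rightarrow> real \<Rightarrow> real measure)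
   \<Rightarrow> ('x \<Rightarrow> real \<Rightarrow> real \<Rightarrow> (real \<times> real) measure) \<Rightarrow> 'x \<Rightarrow> real \<Rightarrow> real \<Rightarrow> real \<Rightarrow> real \<Rightarrow> real" where
  "cdfYDSZ P Q muZ kV kY x y d s z =
     measure (lawX muZ kV kY x)
       {w. Yobs P Q x w \<le> y \<and> Dobs P x w \<le> d \<and> Sobs P Q x w \<le> s \<and> Zof w \<le> z}"

definition msupport :: "real measure \<Rightarrow> real set" where
  "msupport M = {y. \<forall>e>0. emeasure M (ball y e) \<noteq> 0}"

definition lawYstar ::
  "'x measure \<Rightarrow> ('x \<Rightarrow> real measure) \<Rightarrow> ('x \<Rightarrow> real \<Rightarrow> real measure)
   \<Rightarrow> ('x \<Rightarrow> real \<Rightarrow> real \<Rightarrow> (real \<times> real) measure) \<Rightarrow> nat \<Rightarrow> real measure" where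
  "lawYstar muX muZ kV kY d = muX \<bind> (\<lambda>x. distr (lawX muZ kV kY x) borel (Ystar d))"

definition has_lebesgue_density :: "('a::euclidean_space) measure \<Rightarrow> bool" where
  "has_lebesgue_density N \<longleftrightarrow> (\<exists>f \<in> borel_measurable lborel. N = density lborel f)"

end

theory Submission
  imports Defs
begin


lemma unif01_prob: "prob_space unif01"
  unfolding unif01_def by (rule prob_space_uniform_measure) auto

lemma sets_unif01[simp, measurable_cong]: "sets unif01 = sets borel"
  unfolding unif01_def by simp

lemma space_unif01[simp]: "space unif01 = UNIV"
  unfolding unif01_def by simp

lemma unif01_in_space: "unif01 \<in> space (prob_algebra borel)"
  by (simp add: space_prob_algebra unif01_prob)

lemma emeasure_unif01: "S \<in> sets borel \<Longrightarrow> emeasure unif01 S = emeasure lborel ({0..1} \<inter> S)"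
  unfolding unif01_def by (simp add: divide_ennreal_def)

lemma emeasure_unif01_le: "p \<in> {0..1} \<Longrightarrow> emeasure unif01 {..p} = ennreal p"
proof -
  assume p: "p \<in> {0..1}"
  have "{0..1} \<inter> {..p} = {0..p::real}" using p by auto
  then show ?thesis using p by (simp add: emeasure_unif01)
qed

lemma emeasure_unif01_gt: "p \<in> {0..1} \<Longrightarrow> emeasure unif01 {p<..} = ennreal (1 - p)"
proof -
  assume p: "p \<in> {0..1}"
  have "{0..1} \<inter> {p<..} = {p<..1::real}" using p by auto
  then show ?thesis using p by (simp add: emeasure_unif01)
qed


definition mixm :: "real \<Rightarrow> 'a measure \<Rightarrow> 'a measure \<Rightarrow> 'a measure" where
  "mixm p A B = unif01 \<bind> (\<lambda>t. if t \<le> p then A else B)"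

lemma mix_sel_meas:
  fixes p :: real
  assumes "A \<in> space (prob_algebra N)" "B \<in> space (prob_algebra N)"
  shows "(\<lambda>t. if t \<le> p then A else B) \<in> borel \<rightarrow>\<^sub>M prob_algebra N"
proof (rule measurable_If[OF measurable_const measurable_const])
  show "A \<in> space (prob_algebra N)" "B \<in> space (prob_algebra N)" by fact+
  have "{x \<in> space borel. x \<le> p} = {..p}" by auto
  then show "{x \<in> space borel. x \<le> p} \<in> sets borel" using borel_closed[OF closed_atMost, of p] by simp
qed

lemma emeasure_mixm:
  assumes A: "A \<in> space (prob_algebra N)" and B: "B \<in> space (prob_algebra N)"
    and p: "p \<in> {0..1}" and S: "S \<in> sets N"
  shows "emeasure (mixm p A B) S = ennreal p * emeasure A S + ennreal (1 - p) * emeasure B S"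
proof -
  have "emeasure (mixm p A B) S = (\<integral>\<^sup>+t. emeasure (if t \<le> p then A else B) S \<partial>unif01)"
    unfolding mixm_def by (rule emeasure_bind_prob_algebra[OF unif01_in_space mix_sel_meas[OF A B] S])
  also have "\<dots> = (\<integral>\<^sup>+t. emeasure A S * indicator {..p} t + emeasure B S * indicator {p<..} t \<partial>unif01)"
    by (intro nn_integral_cong) (auto split: split_indicator)
  also have "\<dots> = emeasure A S * emeasure unif01 {..p} + emeasure B S * emeasure unif01 {p<..}"
    apply (subst nn_integral_add)
      apply simp
     apply simp
    apply (subst nn_integral_cmult_indicator, simp)
    apply (subst nn_integral_cmult_indicator, simp)
    apply simp
    done
  also have "\<dots> = ennreal p * emeasure A S + ennreal (1 - p) * emeasure B S"
    using p by (simp add: emeasure_unif01_le emeasure_unif01_gt mult.commute)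
  finally show ?thesis .
qed

lemma mixm_in_space:
  assumes A: "A \<in> space (prob_algebra N)" and B: "B \<in> space (prob_algebra N)"
  shows "mixm p A B \<in> space (prob_algebra N)"
  using prob_space_bind'[OF unif01_in_space mix_sel_meas[OF A B]] sets_bind'[OF unif01_in_space mix_sel_meas[OF A B]]
  by (simp add: space_prob_algebra mixm_def)

lemma mixm_1:
  assumes A: "A \<in> space (prob_algebra N)" and B: "B \<in> space (prob_algebra N)"
  shows "mixm 1 A B = A"
proof (rule measure_eqI)
  show "sets (mixm 1 A B) = sets A" using mixm_in_space[OF A B] A by (simp add: space_prob_algebra)
  fix S assume "S \<in> sets (mixm 1 A B)"
  then have "S \<in> sets N" using mixm_in_space[OF A B] by (simp add: space_prob_algebra)
  then show "emeasure (mixm 1 A B) S = emeasure A S" by (simp add: emeasure_mixm[OF A B])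
qed

lemma mixm_0:
  assumes A: "A \<in> space (prob_algebra N)" and B: "B \<in> space (prob_algebra N)"
  shows "mixm 0 A B = B"
proof (rule measure_eqI)
  show "sets (mixm 0 A B) = sets B" using mixm_in_space[OF A B] B by (simp add: space_prob_algebra)
  fix S assume "S \<in> sets (mixm 0 A B)"
  then have "S \<in> sets N" using mixm_in_space[OF A B] by (simp add: space_prob_algebra)
  then show "emeasure (mixm 0 A B) S = emeasure B S" by (simp add: emeasure_mixm[OF A B])
qed

lemma measure_mixm:
  assumes A: "A \<in> space (prob_algebra N)" and B: "B \<in> space (prob_algebra N)"
    and p: "p \<in> {0..1}" and S: "S \<in> sets N"
  shows "measure (mixm p A B) S = p * measure A S + (1 - p) * measure B S"
proof -
  interpret a: prob_space A using A by (simp add: space_prob_algebra)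
  interpret b: prob_space B using B by (simp add: space_prob_algebra)
  have "emeasure (mixm p A B) S = ennreal (p * measure A S + (1 - p) * measure B S)"
    using p by (simp add: emeasure_mixm[OF A B p S] a.emeasure_eq_measure b.emeasure_eq_measure
        ennreal_mult ennreal_plus)
  then have "measure (mixm p A B) S = enn2real (ennreal (p * measure A S + (1 - p) * measure B S))"
    by (simp only: measure_def)
  also have "\<dots> = p * measure A S + (1 - p) * measure B S"
    using p by (intro enn2real_ennreal) auto
  finally show ?thesis .
qed

lemma mix_sel_meas2: fixes p :: "'a \<Rightarrow> real"
  assumes p: "p \<in> borel_measurable M" and A: "A \<in> M \<rightarrow>\<^sub>M prob_algebra N"
    and B: "B \<in> M \<rightarrow>\<^sub>M prob_algebra N"
  shows "(\<lambda>(x, t). if t \<le> p x then A x else B x) \<in> M \<Otimes>\<^sub>M borel \<rightarrow>\<^sub>M prob_algebra N"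
proof -
    have e: "(\<lambda>(x, t). if t \<le> p x then A x else B x) = (\<lambda>y. if snd y \<le> p (fst y) then A (fst y) else B (fst y))"
      by auto
    have s: "{y \<in> space (M \<Otimes>\<^sub>M borel). snd y \<le> p (fst y)} \<in> sets (M \<Otimes>\<^sub>M borel)"
      using p by measurable
    have a: "(\<lambda>y. A (fst y)) \<in> M \<Otimes>\<^sub>M borel \<rightarrow>\<^sub>M prob_algebra N"
      by (rule measurable_compose[OF measurable_fst A])
    have b: "(\<lambda>y. B (fst y)) \<in> M \<Otimes>\<^sub>M borel \<rightarrow>\<^sub>M prob_algebra N"
      by (rule measurable_compose[OF measurable_fst B])
    show ?thesis unfolding e
      using measurable_If[OF a b s] .
qed

lemma mixm_measurable:
  fixes p :: "'a \<Rightarrow> real"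
  assumes p: "p \<in> borel_measurable M" and A: "A \<in> M \<rightarrow>\<^sub>M prob_algebra N"
    and B: "B \<in> M \<rightarrow>\<^sub>M prob_algebra N"
  shows "(\<lambda>x. mixm (p x) (A x) (B x)) \<in> M \<rightarrow>\<^sub>M prob_algebra N"
  unfolding mixm_def
proof (rule measurable_bind_prob_space2[where N=borel])
  show "(\<lambda>x. unif01) \<in> M \<rightarrow>\<^sub>M prob_algebra borel" using unif01_in_space by simp
  show "(\<lambda>(x, t). if t \<le> p x then A x else B x) \<in> M \<Otimes>\<^sub>M borel \<rightarrow>\<^sub>M prob_algebra N"
    by (rule mix_sel_meas2[OF p A B])
qed



lemma inner_meas:
  fixes K :: "real \<Rightarrow> (real \<times> real) measure"
  assumes K: "K \<in> borel \<rightarrow>\<^sub>M prob_algebra borel"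
  shows "(\<lambda>v. K v \<bind> (\<lambda>y. return borel (v, y))) \<in> borel \<rightarrow>\<^sub>M prob_algebra (borel :: (real \<times> real \<times> real) measure)"
proof (rule measurable_bind_prob_space2[OF K])
  have "(\<lambda>p. p) \<in> (borel \<Otimes>\<^sub>M borel) \<rightarrow>\<^sub>M (borel :: (real \<times> real \<times> real) measure)"
    by (simp add: borel_prod)
  then have "(\<lambda>p. return borel p) \<in> (borel \<Otimes>\<^sub>M borel) \<rightarrow>\<^sub>M prob_algebra (borel :: (real \<times> real \<times> real) measure)"
    by (rule measurable_compose[OF _ measurable_return_prob_space])
  then show "(\<lambda>(v, y). return borel (v, y)) \<in> (borel \<Otimes>\<^sub>M borel) \<rightarrow>\<^sub>M prob_algebra (borel :: (real \<times> real \<times> real) measure)"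
    by (simp add: case_prod_beta')
qed

lemma lawVY_meas:
  assumes kV: "kV x \<in> borel \<rightarrow>\<^sub>M prob_algebra borel"
    and kY: "(\<lambda>(u, v). kY x u v) \<in> borel \<Otimes>\<^sub>M borel \<rightarrow>\<^sub>M prob_algebra borel"
  shows "(\<lambda>u. lawVY kV kY x u) \<in> borel \<rightarrow>\<^sub>M prob_algebra borel"
  unfolding lawVY_def
proof (rule measurable_bind_prob_space2[OF kV])
  have p1: "(\<lambda>z. (snd (fst z), snd z)) \<in> ((borel \<Otimes>\<^sub>M borel) \<Otimes>\<^sub>M borel) \<rightarrow>\<^sub>M (borel \<Otimes>\<^sub>M (borel :: (real \<times> real) measure))"
    by (intro measurable_Pair measurable_compose[OF measurable_fst measurable_snd] measurable_snd)
  have "(\<lambda>z. (snd (fst z), snd z)) \<in> ((borel \<Otimes>\<^sub>M borel) \<Otimes>\<^sub>M borel) \<rightarrow>\<^sub>M (borel :: (real \<times> real \<times> real) measure)"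
    using p1 by (simp add: borel_prod)
  then have "(\<lambda>z. return borel (snd (fst z), snd z)) \<in> ((borel \<Otimes>\<^sub>M borel) \<Otimes>\<^sub>M borel) \<rightarrow>\<^sub>M prob_algebra (borel :: (real \<times> real \<times> real) measure)"
    by (rule measurable_compose[OF _ measurable_return_prob_space])
  then have "(\<lambda>(uv, y). return borel (snd uv, y)) \<in> ((borel \<Otimes>\<^sub>M borel) \<Otimes>\<^sub>M borel) \<rightarrow>\<^sub>M prob_algebra (borel :: (real \<times> real \<times> real) measure)"
    by (simp add: case_prod_beta')
  then have "(\<lambda>uv. kY x (fst uv) (snd uv) \<bind> (\<lambda>y. return borel (snd uv, y))) \<in> (borel \<Otimes>\<^sub>M borel) \<rightarrow>\<^sub>M prob_algebra (borel :: (real \<times> real \<times> real) measure)"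
    using measurable_bind_prob_space2[where f="\<lambda>uv. kY x (fst uv) (snd uv)" and g="\<lambda>uv y. return borel (snd uv, y)"] kY
    by (simp add: case_prod_beta')
  then show "(\<lambda>(u, v). kY x u v \<bind> (\<lambda>y. return borel (v, y))) \<in> borel \<Otimes>\<^sub>M borel \<rightarrow>\<^sub>M prob_algebra borel"
    by (simp add: case_prod_beta')
qed

lemma lawVY_in_space:
  assumes kV: "kV x u \<in> space (prob_algebra borel)"
    and kY: "kY x u \<in> borel \<rightarrow>\<^sub>M prob_algebra borel"
  shows "lawVY kV kY x u \<in> space (prob_algebra borel)"
  using prob_space_bind'[OF kV inner_meas[OF kY]] sets_bind'[OF kV inner_meas[OF kY]]
  unfolding lawVY_def space_prob_algebra by blast

lemma emeasure_lawVY: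
  assumes kV: "kV x u \<in> space (prob_algebra borel)"
    and kY: "kY x u \<in> borel \<rightarrow>\<^sub>M prob_algebra borel"
    and S: "S \<in> sets borel"
  shows "emeasure (lawVY kV kY x u) S = (\<integral>\<^sup>+v. emeasure (kY x u v) (Pair v -` S) \<partial>kV x u)"
proof -
  have "emeasure (lawVY kV kY x u) S = (\<integral>\<^sup>+v. emeasure (kY x u v \<bind> (\<lambda>y. return borel (v, y))) S \<partial>kV x u)"
    unfolding lawVY_def by (rule emeasure_bind_prob_algebra[OF kV inner_meas[OF kY] S])
  also have "\<dots> = (\<integral>\<^sup>+v. emeasure (kY x u v) (Pair v -` S) \<partial>kV x u)"
  proof (rule nn_integral_cong)
    fix v
    have kv: "kY x u v \<in> space (prob_algebra borel)" using measurable_space[OF kY] by simp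
    then have sk: "sets (kY x u v) = sets borel" by (simp add: space_prob_algebra)
    then have sp: "space (kY x u v) = UNIV" by (metis sets_eq_imp_space_eq space_borel)
    then have ne: "space (kY x u v) \<noteq> {}" by simp
    have pm0: "Pair v \<in> (borel :: (real \<times> real) measure) \<rightarrow>\<^sub>M (borel :: (real \<times> real \<times> real) measure)"
      by measurable
    have pm: "Pair v \<in> kY x u v \<rightarrow>\<^sub>M (borel :: (real \<times> real \<times> real) measure)"
      by (subst measurable_cong_sets[OF sk refl]) (rule pm0)
    have "kY x u v \<bind> (\<lambda>y. return borel (v, y)) = distr (kY x u v) borel (Pair v)"
      by (rule bind_return_distr'[OF ne pm])
    then show "emeasure (kY x u v \<bind> (\<lambda>y. return borel (v, y))) S = emeasure (kY x u v) (Pair v -` S)"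
      using emeasure_distr[OF pm S] sp by simp
  qed
  finally show ?thesis .
qed

lemma emeasure_lawVY_fst:
  assumes kV: "kV x u \<in> space (prob_algebra borel)"
    and kY: "kY x u \<in> borel \<rightarrow>\<^sub>M prob_algebra borel"
    and S: "S \<in> sets borel"
  shows "emeasure (lawVY kV kY x u) (S \<times> UNIV) = emeasure (kV x u) S"
proof -
  have SU: "S \<times> (UNIV :: (real \<times> real) set) \<in> sets borel" using S by (intro borel_Times) auto
  have "emeasure (lawVY kV kY x u) (S \<times> UNIV) = (\<integral>\<^sup>+v. indicator S v \<partial>kV x u)"
    unfolding emeasure_lawVY[where kV=kV and kY=kY and x=x and u=u, OF kV kY SU]
  proof (rule nn_integral_cong)
    fix v
    have kv: "kY x u v \<in> space (prob_algebra borel)" using measurable_space[OF kY] by simp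
    then have sk: "sets (kY x u v) = sets borel" by (simp add: space_prob_algebra)
    then have sp: "space (kY x u v) = UNIV" by (metis sets_eq_imp_space_eq space_borel)
    interpret prob_space "kY x u v" using kv by (simp add: space_prob_algebra)
    show "emeasure (kY x u v) (Pair v -` (S \<times> UNIV)) = indicator S v"
    proof (cases "v \<in> S")
      case True
      then have "Pair v -` (S \<times> UNIV) = space (kY x u v)" using sp by auto
      then show ?thesis using True emeasure_space_1 by simp
    next
      case False
      then have "Pair v -` (S \<times> UNIV) = {}" by auto
      then show ?thesis using False by simp
    qed
  qed
  also have "\<dots> = emeasure (kV x u) S"
  proof -
    have "sets (kV x u) = sets borel" using kV by (simp add: space_prob_algebra)
    then have "S \<in> sets (kV x u)" using S by simp
    then show ?thesis by (rule nn_integral_indicator)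
  qed
  finally show ?thesis .
qed



definition KZ :: "('x \<Rightarrow> real \<Rightarrow> real measure) \<Rightarrow> ('x \<Rightarrow> real \<Rightarrow> real \<Rightarrow> (real \<times> real) measure) \<Rightarrow> 'x \<Rightarrow> real \<Rightarrow> (real \<times> real \<times> real \<times> real \<times> real) measure" where
  "KZ kV kY x z = unif01 \<bind> (\<lambda>u. distr (lawVY kV kY x u) borel (\<lambda>t. (z, u, t)))"

lemma tup_meas:
  "(\<lambda>p. (fst (fst p), snd (fst p), snd p)) \<in> (borel \<Otimes>\<^sub>M borel) \<Otimes>\<^sub>M borel \<rightarrow>\<^sub>M
     (borel :: (real \<times> real \<times> real \<times> real \<times> real) measure)"
proof -
  have "(\<lambda>p. (fst (fst p), snd (fst p), snd p)) \<in> ((borel :: real measure) \<Otimes>\<^sub>M (borel :: real measure)) \<Otimes>\<^sub>M (borel :: (real \<times> real \<times> real) measure) \<rightarrow>\<^sub>M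
     (borel \<Otimes>\<^sub>M (borel \<Otimes>\<^sub>M borel))"
    by (intro measurable_Pair measurable_compose[OF measurable_fst measurable_snd]
        measurable_compose[OF measurable_fst measurable_fst] measurable_snd)
  then show ?thesis by (simp add: borel_prod)
qed

lemma distr_part_meas:
  assumes LV: "(\<lambda>u. lawVY kV kY x u) \<in> borel \<rightarrow>\<^sub>M prob_algebra borel"
  shows "(\<lambda>(z::real, u). distr (lawVY kV kY x u) borel (\<lambda>t. (z, u, t))) \<in> borel \<Otimes>\<^sub>M borel \<rightarrow>\<^sub>M prob_algebra borel"
proof -
  have g: "(\<lambda>zu::real\<times>real. lawVY kV kY x (snd zu)) \<in> (borel \<Otimes>\<^sub>M borel) \<rightarrow>\<^sub>M prob_algebra borel"
    by (rule measurable_compose[OF measurable_snd LV])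
  have f: "(\<lambda>(zu::real\<times>real, t::real\<times>real\<times>real). (fst zu, snd zu, t)) \<in> (borel \<Otimes>\<^sub>M borel) \<Otimes>\<^sub>M borel \<rightarrow>\<^sub>M
     (borel :: (real \<times> real \<times> real \<times> real \<times> real) measure)"
    using tup_meas by (simp add: case_prod_beta')
  have "(\<lambda>zu::real\<times>real. distr (lawVY kV kY x (snd zu)) borel (\<lambda>t. (fst zu, snd zu, t))) \<in> borel \<Otimes>\<^sub>M borel \<rightarrow>\<^sub>M prob_algebra borel"
    by (rule measurable_distr_prob_space2[OF g f])
  then show ?thesis by (simp add: case_prod_beta')
qed

lemma KZ_meas:
  assumes LV: "(\<lambda>u. lawVY kV kY x u) \<in> borel \<rightarrow>\<^sub>M prob_algebra borel"
  shows "(\<lambda>z. KZ kV kY x z) \<in> borel \<rightarrow>\<^sub>M prob_algebra borel"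
  unfolding KZ_def
  by (rule measurable_bind_prob_space2[where N=borel, OF _ distr_part_meas[OF LV]])
     (use unif01_in_space in simp)

lemma lawX_eq:
  assumes LV: "(\<lambda>u. lawVY kV kY x u) \<in> borel \<rightarrow>\<^sub>M prob_algebra borel"
  shows "lawX muZ kV kY x = muZ x \<bind> KZ kV kY x"
  unfolding lawX_def KZ_def
proof (intro bind_cong refl)
  fix z u :: real
  have e: "(\<lambda>(v, y0, y1). return borel (z, u, v, y0, y1)) = (\<lambda>t. return borel (z, u, t))"
    by (rule ext) (auto split: prod.splits)
  have ls: "lawVY kV kY x u \<in> space (prob_algebra borel)" using measurable_space[OF LV] by simp
  then have sk: "sets (lawVY kV kY x u) = sets borel" by (simp add: space_prob_algebra)
  then have sp: "space (lawVY kV kY x u) = UNIV" by (metis sets_eq_imp_space_eq space_borel)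
  then have ne: "space (lawVY kV kY x u) \<noteq> {}" by simp
  have m0: "(\<lambda>t. (z, u, t)) \<in> (borel :: (real \<times> real \<times> real) measure) \<rightarrow>\<^sub>M (borel :: (real \<times> real \<times> real \<times> real \<times> real) measure)"
    by measurable
  have m: "(\<lambda>t. (z, u, t)) \<in> lawVY kV kY x u \<rightarrow>\<^sub>M (borel :: (real \<times> real \<times> real \<times> real \<times> real) measure)"
    by (subst measurable_cong_sets[OF sk refl]) (rule m0)
  show "lawVY kV kY x u \<bind> (\<lambda>(v, y0, y1). return borel (z, u, v, y0, y1)) = distr (lawVY kV kY x u) borel (\<lambda>t. (z, u, t))"
    unfolding e by (rule bind_return_distr'[OF ne m])
qed

lemma emeasure_KZ:
  assumes LV: "(\<lambda>u. lawVY kV kY x u) \<in> borel \<rightarrow>\<^sub>M prob_algebra borel"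
    and A: "A \<in> sets borel"
  shows "emeasure (KZ kV kY x z) A = (\<integral>\<^sup>+u. emeasure (lawVY kV kY x u) ((\<lambda>t. (z, u, t)) -` A) \<partial>unif01)"
proof -
  have g: "(\<lambda>u. distr (lawVY kV kY x u) borel (\<lambda>t. (z, u, t))) \<in> borel \<rightarrow>\<^sub>M prob_algebra borel"
  proof -
    have "(\<lambda>u. (z, u)) \<in> (borel :: real measure) \<rightarrow>\<^sub>M (borel \<Otimes>\<^sub>M (borel :: real measure))" by measurable
    from measurable_compose[OF this distr_part_meas[OF LV]] show ?thesis by simp
  qed
  have "emeasure (KZ kV kY x z) A = (\<integral>\<^sup>+u. emeasure (distr (lawVY kV kY x u) borel (\<lambda>t. (z, u, t))) A \<partial>unif01)"
    unfolding KZ_def by (rule emeasure_bind_prob_algebra[OF unif01_in_space g A])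
  also have "\<dots> = (\<integral>\<^sup>+u. emeasure (lawVY kV kY x u) ((\<lambda>t. (z, u, t)) -` A) \<partial>unif01)"
  proof (rule nn_integral_cong)
    fix u
    have ls: "lawVY kV kY x u \<in> space (prob_algebra borel)" using measurable_space[OF LV] by simp
    then have sk: "sets (lawVY kV kY x u) = sets borel" by (simp add: space_prob_algebra)
    then have sp: "space (lawVY kV kY x u) = UNIV" by (metis sets_eq_imp_space_eq space_borel)
    have m0: "(\<lambda>t. (z, u, t)) \<in> (borel :: (real \<times> real \<times> real) measure) \<rightarrow>\<^sub>M (borel :: (real \<times> real \<times> real \<times> real \<times> real) measure)"
      by measurable
    have m: "(\<lambda>t. (z, u, t)) \<in> lawVY kV kY x u \<rightarrow>\<^sub>M (borel :: (real \<times> real \<times> real \<times> real \<times> real) measure)"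
      by (subst measurable_cong_sets[OF sk refl]) (rule m0)
    show "emeasure (distr (lawVY kV kY x u) borel (\<lambda>t. (z, u, t))) A = emeasure (lawVY kV kY x u) ((\<lambda>t. (z, u, t)) -` A)"
      using emeasure_distr[OF m A] sp by simp
  qed
  finally show ?thesis .
qed

lemma emeasure_lawX:
  assumes muZ: "muZ x \<in> space (prob_algebra borel)"
    and LV: "(\<lambda>u. lawVY kV kY x u) \<in> borel \<rightarrow>\<^sub>M prob_algebra borel"
    and A: "A \<in> sets borel"
  shows "emeasure (lawX muZ kV kY x) A = (\<integral>\<^sup>+z. emeasure (KZ kV kY x z) A \<partial>muZ x)"
  unfolding lawX_eq[OF LV] by (rule emeasure_bind_prob_algebra[OF muZ KZ_meas[OF LV] A])

lemma lawX_in_space: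
  assumes muZ: "muZ x \<in> space (prob_algebra borel)"
    and LV: "(\<lambda>u. lawVY kV kY x u) \<in> borel \<rightarrow>\<^sub>M prob_algebra borel"
  shows "lawX muZ kV kY x \<in> space (prob_algebra borel)"
  using prob_space_bind'[OF muZ KZ_meas[OF LV]] sets_bind'[OF muZ KZ_meas[OF LV]]
  unfolding lawX_eq[OF LV] space_prob_algebra by blast



definition bump :: "real \<Rightarrow> real \<Rightarrow> real \<Rightarrow> real" where
  "bump h c u = max 0 (1 - \<bar>u - c\<bar> * inverse h)"

definition clamp01 :: "real \<Rightarrow> real" where
  "clamp01 v = max 0 (min 1 v)"

lemma bump_range: "bump h c u \<in> {0..1}" if "h > 0"
  using that by (auto simp: bump_def)

lemma bump_c: "h > 0 \<Longrightarrow> bump h c c = 1"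
  by (simp add: bump_def)

lemma bump_nz: "h > 0 \<Longrightarrow> bump h c u \<noteq> 0 \<Longrightarrow> u \<in> {c - h<..<c + h}"
proof -
  assume h: "h > 0" and b: "bump h c u \<noteq> 0"
  then have "1 - \<bar>u - c\<bar> * inverse h > 0" unfolding bump_def by (auto simp: max_def split: if_splits)
  then have "\<bar>u - c\<bar> * inverse h < 1" by simp
  then have "\<bar>u - c\<bar> < h" using h by (simp add: field_simps)
  then show ?thesis by auto
qed

lemma bump_cont: "continuous_on S (bump h c)"
  unfolding bump_def by (intro continuous_intros)

lemma bump_meas[measurable]: "bump h c \<in> borel_measurable borel"
  by (intro borel_measurable_continuous_onI bump_cont)

lemma clamp01_meas[measurable]: "clamp01 \<in> borel_measurable borel"
  unfolding clamp01_def by measurable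

lemma clamp01_id: "v \<in> {0..1} \<Longrightarrow> clamp01 v = v"
  by (auto simp: clamp01_def)

lemma clamp01_vimage: "clamp01 -` {..v} = (if v < 0 then {} else if v \<ge> 1 then UNIV else {..v})"
  by (auto simp: clamp01_def)

lemma emeas_k:
  assumes K: "K \<in> M \<rightarrow>\<^sub>M prob_algebra N" and A: "A \<in> sets N"
  shows "(\<lambda>a. emeasure (K a) A) \<in> borel_measurable M"
  using measurable_compose[OF measurable_prob_algebraD[OF K] measurable_emeasure_subprob_algebra[OF A]] .

definition kVm :: "real \<Rightarrow> real \<Rightarrow> ('x \<Rightarrow> real \<Rightarrow> real measure) \<Rightarrow> 'x \<Rightarrow> real \<Rightarrow> real measure" where
  "kVm h c kV x u = mixm (bump h c u) unif01 (distr (kV x u) borel clamp01)"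

definition kYm :: "real \<Rightarrow> real \<Rightarrow> real \<Rightarrow> ('x \<Rightarrow> real \<Rightarrow> real \<Rightarrow> (real \<times> real) measure) \<Rightarrow> 'x \<Rightarrow> real \<Rightarrow> real \<Rightarrow> (real \<times> real) measure" where
  "kYm h c d kY x u v = mixm (bump h c u) (return borel (0, d)) (kY x u v)"

lemma return_in_space: "return borel (a::'a::topological_space) \<in> space (prob_algebra borel)"
  by (simp add: space_prob_algebra prob_space_return)

lemma kVm_kernel:
  assumes K: "(\<lambda>(x, u). kV x u) \<in> M \<Otimes>\<^sub>M borel \<rightarrow>\<^sub>M prob_algebra borel"
  shows "(\<lambda>(x, u). kVm h c kV x u) \<in> M \<Otimes>\<^sub>M borel \<rightarrow>\<^sub>M prob_algebra borel"
proof -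
  have p: "(\<lambda>xu. bump h c (snd xu)) \<in> borel_measurable (M \<Otimes>\<^sub>M borel)"
    by (rule measurable_compose[OF measurable_snd bump_meas])
  have a: "(\<lambda>xu. unif01) \<in> M \<Otimes>\<^sub>M borel \<rightarrow>\<^sub>M prob_algebra borel"
    using unif01_in_space by simp
  have K': "(\<lambda>xu. kV (fst xu) (snd xu)) \<in> M \<Otimes>\<^sub>M borel \<rightarrow>\<^sub>M prob_algebra borel"
    using K by (simp add: case_prod_beta')
  have f: "(\<lambda>(xu, v). clamp01 v) \<in> (M \<Otimes>\<^sub>M borel) \<Otimes>\<^sub>M borel \<rightarrow>\<^sub>M borel"
    using measurable_compose[OF measurable_snd clamp01_meas, of "M \<Otimes>\<^sub>M borel"] by (simp add: case_prod_beta')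
  have b: "(\<lambda>xu. distr (kV (fst xu) (snd xu)) borel clamp01) \<in> M \<Otimes>\<^sub>M borel \<rightarrow>\<^sub>M prob_algebra borel"
    using measurable_distr_prob_space2[OF K' f] by simp
  show ?thesis
    using mixm_measurable[OF p a b] by (simp add: kVm_def case_prod_beta')
qed

lemma kYm_kernel:
  assumes K: "(\<lambda>(x, u, v). kY x u v) \<in> M \<Otimes>\<^sub>M (borel \<Otimes>\<^sub>M borel) \<rightarrow>\<^sub>M prob_algebra borel"
  shows "(\<lambda>(x, u, v). kYm h c d kY x u v) \<in> M \<Otimes>\<^sub>M (borel \<Otimes>\<^sub>M borel) \<rightarrow>\<^sub>M prob_algebra borel"
proof -
  have p: "(\<lambda>xuv. bump h c (fst (snd xuv))) \<in> borel_measurable (M \<Otimes>\<^sub>M (borel \<Otimes>\<^sub>M borel))"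
    by (rule measurable_compose[OF measurable_compose[OF measurable_snd measurable_fst] bump_meas])
  have a: "(\<lambda>xuv. return borel (0, d)) \<in> M \<Otimes>\<^sub>M (borel \<Otimes>\<^sub>M borel) \<rightarrow>\<^sub>M prob_algebra borel"
    using return_in_space by simp
  have K': "(\<lambda>xuv. kY (fst xuv) (fst (snd xuv)) (snd (snd xuv))) \<in> M \<Otimes>\<^sub>M (borel \<Otimes>\<^sub>M borel) \<rightarrow>\<^sub>M prob_algebra borel"
    using K by (simp add: case_prod_beta')
  show ?thesis
    using mixm_measurable[OF p a K'] by (simp add: kYm_def case_prod_beta')
qed

lemma sec2:
  assumes K: "(\<lambda>(x, u). K x u) \<in> M \<Otimes>\<^sub>M borel \<rightarrow>\<^sub>M prob_algebra N" and x: "x \<in> space M"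
  shows "K x \<in> (borel :: real measure) \<rightarrow>\<^sub>M prob_algebra N"
  using measurable_compose[OF measurable_Pair1'[OF x] K] by simp

lemma sec3:
  assumes K: "(\<lambda>(x, u, v). K x u v) \<in> M \<Otimes>\<^sub>M (borel \<Otimes>\<^sub>M borel) \<rightarrow>\<^sub>M prob_algebra N" and x: "x \<in> space M"
  shows "(\<lambda>(u, v). K x u v) \<in> ((borel :: real measure) \<Otimes>\<^sub>M (borel :: real measure)) \<rightarrow>\<^sub>M prob_algebra N"
    and "K x u \<in> (borel :: real measure) \<rightarrow>\<^sub>M prob_algebra N"
proof -
  show 1: "(\<lambda>(u, v). K x u v) \<in> ((borel :: real measure) \<Otimes>\<^sub>M (borel :: real measure)) \<rightarrow>\<^sub>M prob_algebra N"
    using measurable_compose[OF measurable_Pair1'[OF x] K] by (simp add: case_prod_beta')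
  show "K x u \<in> (borel :: real measure) \<rightarrow>\<^sub>M prob_algebra N"
    using measurable_compose[OF measurable_Pair1'[of u borel borel] 1] by simp
qed



lemma distr_in_space:
  assumes M: "M \<in> space (prob_algebra (borel :: 'a::topological_space measure))"
    and f: "f \<in> (borel :: 'a measure) \<rightarrow>\<^sub>M (borel :: 'b::topological_space measure)"
  shows "distr M borel f \<in> space (prob_algebra borel)"
  using measurable_space[OF measurable_distr_prob_space[OF f] M] .

lemma emeasure_distr_k:
  assumes M: "M \<in> space (prob_algebra (borel :: 'a::topological_space measure))"
    and f: "f \<in> (borel :: 'a measure) \<rightarrow>\<^sub>M (borel :: 'b::topological_space measure)"
    and S: "S \<in> sets borel"
  shows "emeasure (distr M borel f) S = emeasure M (f -` S)"
    and "measure (distr M borel f) S = measure M (f -` S)"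
proof -
  have sk: "sets M = sets borel" using M by (simp add: space_prob_algebra)
  then have sp: "space M = UNIV" by (metis sets_eq_imp_space_eq space_borel)
  have fm: "f \<in> M \<rightarrow>\<^sub>M borel" by (subst measurable_cong_sets[OF sk refl]) (rule f)
  show "emeasure (distr M borel f) S = emeasure M (f -` S)"
    using emeasure_distr[OF fm S] sp by simp
  show "measure (distr M borel f) S = measure M (f -` S)"
    using measure_distr[OF fm S] sp by simp
qed

lemma measure_space_1:
  assumes M: "M \<in> space (prob_algebra (borel :: 'a::topological_space measure))"
  shows "measure M UNIV = 1" "emeasure M UNIV = 1"
proof -
  have sk: "sets M = sets borel" using M by (simp add: space_prob_algebra)
  then have sp: "space M = UNIV" by (metis sets_eq_imp_space_eq space_borel)
  interpret prob_space M using M by (simp add: space_prob_algebra)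
  show "measure M UNIV = 1" "emeasure M UNIV = 1" using prob_space emeasure_space_1 sp by auto
qed

lemma kVm_cont:
  assumes h: "h > 0"
    and K: "kV x \<in> (borel :: real measure) \<rightarrow>\<^sub>M prob_algebra borel"
    and cont: "continuous_on {0..1} (\<lambda>u. measure (kV x u) {..v})"
  shows "continuous_on {0..1} (\<lambda>u. measure (kVm h c kV x u) {..v})"
proof -
  have kin: "kV x u \<in> space (prob_algebra borel)" for u using measurable_space[OF K] by simp
  have din: "distr (kV x u) borel clamp01 \<in> space (prob_algebra borel)" for u
    by (rule distr_in_space[OF kin clamp01_meas])
  define g where "g u = measure (kV x u) (clamp01 -` {..v})" for u
  have eq: "measure (kVm h c kV x u) {..v} = bump h c u * measure unif01 {..v} + (1 - bump h c u) * g u" for u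
    unfolding kVm_def g_def
    using measure_mixm[OF unif01_in_space din bump_range[OF h], of "{..v}"] emeasure_distr_k(2)[OF kin clamp01_meas, of "{..v}"]
    by simp
  have gc: "continuous_on {0..1} g"
  proof (cases "v < 0")
    case True
    then show ?thesis unfolding g_def clamp01_vimage by simp
  next
    case False
    show ?thesis
    proof (cases "v \<ge> 1")
      case True
      then have "g u = 1" for u using False unfolding g_def clamp01_vimage using measure_space_1(1)[OF kin] by simp
      then show ?thesis by simp
    next
      case False2: False
      then have "g u = measure (kV x u) {..v}" for u using False unfolding g_def clamp01_vimage by simp
      then show ?thesis using cont by simp
    qed
  qed
  show ?thesis unfolding eq
    by (intro continuous_intros bump_cont gc)
qed

lemma kYm_cont:
  assumes h: "h > 0"
    and K: "kY x u \<in> (borel :: real measure) \<rightarrow>\<^sub>M prob_algebra borel" 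
    and K2: "\<And>u. kY x u v \<in> space (prob_algebra borel)"
    and cont: "continuous_on {0..1} (\<lambda>u. measure (kY x u v) ({..y0} \<times> {..y1}))"
  shows "continuous_on {0..1} (\<lambda>u. measure (kYm h c d kY x u v) ({..y0} \<times> {..y1}))"
proof -
  have R: "{..y0} \<times> {..y1} \<in> sets (borel :: (real \<times> real) measure)" by (intro borel_Times) auto
  have eq: "measure (kYm h c d kY x u v) ({..y0} \<times> {..y1}) = bump h c u * measure (return borel (0, d)) ({..y0} \<times> {..y1}) + (1 - bump h c u) * measure (kY x u v) ({..y0} \<times> {..y1})" for u
    unfolding kYm_def
    by (rule measure_mixm[OF return_in_space K2 bump_range[OF h] R])
  show ?thesis unfolding eq
    by (intro continuous_intros bump_cont cont)
qed



lemma part2: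
  assumes h: "h > 0"
    and kin: "kV x u \<in> space (prob_algebra borel)"
    and kYm: "kYm h c d kY x u \<in> (borel :: real measure) \<rightarrow>\<^sub>M prob_algebra borel"
  shows "measure (lawVY (kVm h c kV) (kYm h c d kY) x u) ({0..1} \<times> UNIV) = 1"
proof -
  have din: "distr (kV x u) borel clamp01 \<in> space (prob_algebra borel)"
    by (rule distr_in_space[OF kin clamp01_meas])
  have kvm: "kVm h c kV x u \<in> space (prob_algebra borel)"
    unfolding kVm_def by (rule mixm_in_space[OF unif01_in_space din])
  have S: "{0..1::real} \<in> sets borel" by simp
  have "emeasure (lawVY (kVm h c kV) (kYm h c d kY) x u) ({0..1} \<times> UNIV) = emeasure (kVm h c kV x u) {0..1}"
    by (rule emeasure_lawVY_fst[where kV="kVm h c kV" and kY="kYm h c d kY", OF kvm kYm S])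
  also have "\<dots> = ennreal (bump h c u) * emeasure unif01 {0..1} + ennreal (1 - bump h c u) * emeasure (distr (kV x u) borel clamp01) {0..1}"
    unfolding kVm_def by (rule emeasure_mixm[OF unif01_in_space din bump_range[OF h] S])
  also have "emeasure unif01 {0..1} = 1" by (simp add: emeasure_unif01)
  also have "emeasure (distr (kV x u) borel clamp01) {0..1} = 1"
  proof -
    have "clamp01 -` {0..1} = UNIV" by (auto simp: clamp01_def)
    then show ?thesis using emeasure_distr_k(1)[OF kin clamp01_meas S] measure_space_1(2)[OF kin] by simp
  qed
  also have "ennreal (bump h c u) * 1 + ennreal (1 - bump h c u) * 1 = ennreal 1"
    using bump_range[OF h, of c u] by (simp add: ennreal_plus[symmetric] del: ennreal_plus)
  finally show ?thesis by (simp add: measure_def)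
qed

lemma lawVY_at_c:
  assumes h: "h > 0"
    and kin: "kV x c \<in> space (prob_algebra borel)"
    and kY: "\<And>v. kY x c v \<in> space (prob_algebra borel)"
  shows "lawVY (kVm h c kV) (kYm h c d kY) x c = distr unif01 borel (\<lambda>v. (v, 0, d))"
proof -
  have din: "distr (kV x c) borel clamp01 \<in> space (prob_algebra borel)"
    by (rule distr_in_space[OF kin clamp01_meas])
  have e1: "kVm h c kV x c = unif01"
    unfolding kVm_def bump_c[OF h] by (rule mixm_1[OF unif01_in_space din])
  have e2: "kYm h c d kY x c v = return borel (0, d)" for v
    unfolding kYm_def bump_c[OF h] by (rule mixm_1[OF return_in_space kY])
  have e3: "return borel (0::real, d) \<bind> (\<lambda>y. return borel (v, y)) = return borel (v, 0::real, d)" for v :: real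
  proof -
    have pm: "Pair v \<in> (borel :: (real \<times> real) measure) \<rightarrow>\<^sub>M (borel :: (real \<times> real \<times> real) measure)"
      by measurable
    have "(\<lambda>y. return borel (v, y)) \<in> (borel :: (real \<times> real) measure) \<rightarrow>\<^sub>M prob_algebra (borel :: (real \<times> real \<times> real) measure)"
      using measurable_compose[OF pm measurable_return_prob_space] by simp
    then have "(\<lambda>y. return borel (v, y)) \<in> (borel :: (real \<times> real) measure) \<rightarrow>\<^sub>M subprob_algebra (borel :: (real \<times> real \<times> real) measure)"
      by (rule measurable_prob_algebraD)
    from bind_return[OF this] show ?thesis by simp
  qed
  have m0: "(\<lambda>v. (v, 0::real, d)) \<in> (borel :: real measure) \<rightarrow>\<^sub>M (borel :: (real \<times> real \<times> real) measure)"
    by measurable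
  have m: "(\<lambda>v. (v, 0::real, d)) \<in> unif01 \<rightarrow>\<^sub>M (borel :: (real \<times> real \<times> real) measure)"
    by (subst measurable_cong_sets[OF sets_unif01 refl]) (rule m0)
  have "lawVY (kVm h c kV) (kYm h c d kY) x c = unif01 \<bind> (\<lambda>v. return borel (v, 0, d))"
    unfolding lawVY_def e1 e2 e3 ..
  also have "\<dots> = distr unif01 borel (\<lambda>v. (v, 0, d))"
    by (rule bind_return_distr'[OF _ m]) simp
  finally show ?thesis .
qed

lemma part1:
  fixes q0 q1 d :: real
  assumes q: "0 < q0" "q0 \<le> q1" "q0 \<le> 1"
  shows "let L = distr unif01 borel (\<lambda>v. (v, 0::real, d));
           E = {(v, y0, y1). q0 \<ge> v \<and> q1 \<ge> v};
           g = (\<lambda>(v, y0, y1). y1 - y0)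
       in measure L E > 0 \<and> integrable (uniform_measure L E) g
          \<and> (\<integral>w. g w \<partial>uniform_measure L E) = d"
proof -
  define L where "L = distr unif01 borel (\<lambda>v. (v, 0::real, d))"
  define E :: "(real \<times> real \<times> real) set" where "E = {(v, y0, y1). q0 \<ge> v \<and> q1 \<ge> v}"
  define g :: "real \<times> real \<times> real \<Rightarrow> real" where "g = (\<lambda>(v, y0, y1). y1 - y0)"
  have m0: "(\<lambda>v. (v, 0::real, d)) \<in> (borel :: real measure) \<rightarrow>\<^sub>M (borel :: (real \<times> real \<times> real) measure)"
    by measurable
  have uin: "unif01 \<in> space (prob_algebra borel)" by (rule unif01_in_space)
  have Ee: "E = {..q0} \<times> UNIV" using q unfolding E_def by auto
  have Es: "E \<in> sets borel" unfolding Ee by (intro borel_Times) auto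
  have sL: "sets L = sets borel" unfolding L_def by simp
  have LE: "emeasure L E = ennreal q0"
  proof -
    have "(\<lambda>v. (v, 0::real, d)) -` E = {..q0}" unfolding Ee by auto
    then show ?thesis unfolding L_def using emeasure_distr_k(1)[OF uin m0 Es] emeasure_unif01_le[of q0] q by simp
  qed
  have Lin: "L \<in> space (prob_algebra borel)" unfolding L_def by (rule distr_in_space[OF uin m0])
  then interpret L: prob_space L by (simp add: space_prob_algebra)
  have gm: "g \<in> borel_measurable (borel :: (real \<times> real \<times> real) measure)"
  proof -
    have "g = (\<lambda>w. snd (snd w) - fst (snd w))" by (auto simp: g_def)
    moreover have "continuous_on UNIV (\<lambda>w::real \<times> real \<times> real. snd (snd w) - fst (snd w))"
      by (intro continuous_intros)
    ultimately show ?thesis by (simp add: borel_measurable_continuous_onI)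
  qed
  have Ns: "{w. g w \<noteq> d} \<in> sets borel"
  proof -
    have "g -` (- {d}) \<inter> space borel \<in> sets borel" by (rule measurable_sets[OF gm]) auto
    moreover have "g -` (- {d}) \<inter> space borel = {w. g w \<noteq> d}" by auto
    ultimately show ?thesis by simp
  qed
  have Nnull: "emeasure L {w. g w \<noteq> d} = 0"
  proof -
    have "(\<lambda>v. (v, 0::real, d)) -` {w. g w \<noteq> d} = {}" unfolding g_def by auto
    then show ?thesis unfolding L_def using emeasure_distr_k(1)[OF uin m0 Ns] by simp
  qed
  have ae: "AE w in L. g w = d"
  proof (rule AE_I'[of "{w. g w \<noteq> d}"])
    show "{w. g w \<noteq> d} \<in> null_sets L" using Ns Nnull sL by (simp add: null_sets_def)
  qed auto
  have aeU: "AE w in uniform_measure L E. g w = d"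
    by (rule AE_uniform_measureI) (use Es sL ae in auto)
  have pU: "prob_space (uniform_measure L E)"
    by (rule prob_space_uniform_measure) (use LE q in auto)
  have gmU: "g \<in> borel_measurable (uniform_measure L E)"
  proof -
    have sU: "sets (uniform_measure L E) = sets borel" using sL by simp
    show ?thesis by (subst measurable_cong_sets[OF sU refl]) (rule gm)
  qed
  have int: "integrable (uniform_measure L E) g"
    using integrable_cong_AE[OF gmU _ aeU] pU
    by (simp add: prob_space.finite_measure finite_measure.integrable_const)
  have val: "(\<integral>w. g w \<partial>uniform_measure L E) = d"
  proof -
    interpret U: prob_space "uniform_measure L E" by (rule pU)
    have "measure (uniform_measure L E) (space L) = 1" using U.prob_space by simp
    then show ?thesis using integral_cong_AE[OF gmU _ aeU] by simp
  qed
  have pos: "measure L E > 0" using LE q by (simp add: L.emeasure_eq_measure)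
  show ?thesis unfolding Let_def L_def[symmetric] E_def[symmetric] g_def[symmetric]
    using pos int val by simp
qed



lemma emeasure_le_1_k:
  assumes "M \<in> space (prob_algebra N)"
  shows "emeasure M X \<le> 1"
proof -
  interpret prob_space M using assms by (simp add: space_prob_algebra)
  show ?thesis by (rule subprob_emeasure_le_1)
qed

lemma G_meas:
  assumes kY: "kY x u \<in> (borel :: real measure) \<rightarrow>\<^sub>M prob_algebra (borel :: (real \<times> real) measure)"
    and S: "S \<in> sets (borel :: (real \<times> real \<times> real) measure)"
  shows "(\<lambda>v. emeasure (kY x u v) (Pair v -` S)) \<in> borel_measurable borel"
proof (rule emeasure_measurable_subprob_algebra2[where N=borel])
  have "(SIGMA v:space borel. Pair v -` S) = S" by auto
  then show "(SIGMA v:space borel. Pair v -` S) \<in> sets (borel \<Otimes>\<^sub>M (borel :: (real \<times> real) measure))"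
  proof -
    have "sets ((borel :: real measure) \<Otimes>\<^sub>M (borel :: (real \<times> real) measure)) = sets (borel :: (real \<times> real \<times> real) measure)"
      by (simp only: borel_prod)
    then show ?thesis using S \<open>(SIGMA v:space borel. Pair v -` S) = S\<close> by simp
  qed
  show "kY x u \<in> borel \<rightarrow>\<^sub>M subprob_algebra borel" by (rule measurable_prob_algebraD[OF kY])
qed

lemma clamp_bound:
  assumes h: "h > 0" and b0: "bump h c u = 0"
    and kin: "kV x u \<in> space (prob_algebra borel)"
    and kY: "kY x u \<in> (borel :: real measure) \<rightarrow>\<^sub>M prob_algebra (borel :: (real \<times> real) measure)"
    and S: "S \<in> sets (borel :: (real \<times> real \<times> real) measure)"
  shows "emeasure (lawVY (kVm h c kV) (kYm h c d kY) x u) S \<le> emeasure (lawVY kV kY x u) S + emeasure (kV x u) (- {0..1})"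
    and "emeasure (lawVY kV kY x u) S \<le> emeasure (lawVY (kVm h c kV) (kYm h c d kY) x u) S + emeasure (kV x u) (- {0..1})"
proof -
  have din: "distr (kV x u) borel clamp01 \<in> space (prob_algebra borel)"
    by (rule distr_in_space[OF kin clamp01_meas])
  have kyin: "kY x u v \<in> space (prob_algebra borel)" for v using measurable_space[OF kY] by simp
  have e1: "kVm h c kV x u = distr (kV x u) borel clamp01"
    unfolding kVm_def b0 by (rule mixm_0[OF unif01_in_space din])
  have e2: "kYm h c d kY x u = kY x u"
    unfolding kYm_def b0 by (rule ext, rule mixm_0[OF return_in_space kyin])
  define G where "G v = emeasure (kY x u v) (Pair v -` S)" for v
  have Gm: "G \<in> borel_measurable borel" unfolding G_def by (rule G_meas[where kY=kY and x=x and u=u, OF kY S])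
  have G1: "G v \<le> 1" for v unfolding G_def by (rule emeasure_le_1_k[OF kyin])
  have sk: "sets (kV x u) = sets borel" using kin by (simp add: space_prob_algebra)
  have Gm': "G \<in> borel_measurable (kV x u)" by (subst measurable_cong_sets[OF sk refl]) (rule Gm)
  have cm: "clamp01 \<in> kV x u \<rightarrow>\<^sub>M borel" by (subst measurable_cong_sets[OF sk refl]) (rule clamp01_meas)
  have Gcm: "(\<lambda>v. G (clamp01 v)) \<in> borel_measurable (kV x u)"
    by (rule measurable_compose[OF cm Gm])
  have O: "- {0..1::real} \<in> sets (kV x u)" using sk by simp
  have Im: "indicator (- {0..1::real}) \<in> borel_measurable (kV x u)"
    using O by simp
  have old: "emeasure (lawVY kV kY x u) S = (\<integral>\<^sup>+v. G v \<partial>kV x u)"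
    unfolding G_def by (rule emeasure_lawVY[where kV=kV and kY=kY and x=x and u=u, OF kin kY S])
  have kvm: "kVm h c kV x u \<in> space (prob_algebra borel)" using e1 din by simp
  have kym: "kYm h c d kY x u \<in> borel \<rightarrow>\<^sub>M prob_algebra borel" using e2 kY by simp
  have "emeasure (lawVY (kVm h c kV) (kYm h c d kY) x u) S = (\<integral>\<^sup>+v. emeasure (kYm h c d kY x u v) (Pair v -` S) \<partial>kVm h c kV x u)"
    by (rule emeasure_lawVY[where kV="kVm h c kV" and kY="kYm h c d kY" and x=x and u=u, OF kvm kym S])
  also have "\<dots> = (\<integral>\<^sup>+v. G v \<partial>distr (kV x u) borel clamp01)"
    unfolding e1 e2 G_def ..
  also have "\<dots> = (\<integral>\<^sup>+v. G (clamp01 v) \<partial>kV x u)"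
    by (rule nn_integral_distr[OF cm]) (simp add: Gm)
  finally have new: "emeasure (lawVY (kVm h c kV) (kYm h c d kY) x u) S = (\<integral>\<^sup>+v. G (clamp01 v) \<partial>kV x u)" .
  have p1: "G (clamp01 v) \<le> G v + indicator (- {0..1}) v" for v
  proof (cases "v \<in> {0..1}")
    case True then show ?thesis by (simp add: clamp01_id)
  next
    case False
    have "G (clamp01 v) \<le> 1" by (rule G1)
    then show ?thesis using False by (simp add: add_increasing)
  qed
  have p2: "G v \<le> G (clamp01 v) + indicator (- {0..1}) v" for v
  proof (cases "v \<in> {0..1}")
    case True then show ?thesis by (simp add: clamp01_id)
  next
    case False
    then show ?thesis using G1[of v] by (simp add: add_increasing)
  qed
  have "(\<integral>\<^sup>+v. G (clamp01 v) \<partial>kV x u) \<le> (\<integral>\<^sup>+v. G v + indicator (- {0..1}) v \<partial>kV x u)"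
    by (rule nn_integral_mono) (rule p1)
  also have "\<dots> = (\<integral>\<^sup>+v. G v \<partial>kV x u) + emeasure (kV x u) (- {0..1})"
    by (subst nn_integral_add[OF Gm' Im]) (simp add: nn_integral_indicator[OF O])
  finally show "emeasure (lawVY (kVm h c kV) (kYm h c d kY) x u) S \<le> emeasure (lawVY kV kY x u) S + emeasure (kV x u) (- {0..1})"
    unfolding new old .
  have "(\<integral>\<^sup>+v. G v \<partial>kV x u) \<le> (\<integral>\<^sup>+v. G (clamp01 v) + indicator (- {0..1}) v \<partial>kV x u)"
    by (rule nn_integral_mono) (rule p2)
  also have "\<dots> = (\<integral>\<^sup>+v. G (clamp01 v) \<partial>kV x u) + emeasure (kV x u) (- {0..1})"
    by (subst nn_integral_add[OF Gcm Im]) (simp add: nn_integral_indicator[OF O])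
  finally show "emeasure (lawVY kV kY x u) S \<le> emeasure (lawVY (kVm h c kV) (kYm h c d kY) x u) S + emeasure (kV x u) (- {0..1})"
    unfolding new old .
qed



lemma Dz_meas:
  assumes LV: "(\<lambda>u. lawVY kV kY x u) \<in> borel \<rightarrow>\<^sub>M prob_algebra borel"
  shows "(\<lambda>u. distr (lawVY kV kY x u) borel (\<lambda>t. (z::real, u, t))) \<in> borel \<rightarrow>\<^sub>M prob_algebra borel"
proof -
  have "(\<lambda>u. (z, u)) \<in> (borel :: real measure) \<rightarrow>\<^sub>M (borel \<Otimes>\<^sub>M (borel :: real measure))" by measurable
  from measurable_compose[OF this distr_part_meas[where kV=kV and kY=kY and x=x, OF LV]] show ?thesis by simp
qed

lemma slice_eq:
  assumes LV: "(\<lambda>u. lawVY kV kY x u) \<in> borel \<rightarrow>\<^sub>M prob_algebra borel"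
    and A: "A \<in> sets borel"
  shows "emeasure (distr (lawVY kV kY x u) borel (\<lambda>t. (z::real, u, t))) A = emeasure (lawVY kV kY x u) ((\<lambda>t. (z, u, t)) -` A)"
proof -
  have ls: "lawVY kV kY x u \<in> space (prob_algebra borel)" using measurable_space[OF LV] by simp
  have m0: "(\<lambda>t. (z, u, t)) \<in> (borel :: (real \<times> real \<times> real) measure) \<rightarrow>\<^sub>M (borel :: (real \<times> real \<times> real \<times> real \<times> real) measure)"
    by measurable
  show ?thesis by (rule emeasure_distr_k(1)[OF ls m0 A])
qed

lemma cdf_bound:
  assumes muZ: "muZ x \<in> space (prob_algebra borel)"
    and LV1: "(\<lambda>u. lawVY kVa kYa x u) \<in> borel \<rightarrow>\<^sub>M prob_algebra borel"
    and LV2: "(\<lambda>u. lawVY kVb kYb x u) \<in> borel \<rightarrow>\<^sub>M prob_algebra borel"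
    and A: "A \<in> sets borel"
    and H: "H \<in> borel_measurable borel"
    and pw: "\<And>z u. emeasure (lawVY kVa kYa x u) ((\<lambda>t. (z, u, t)) -` A) \<le> emeasure (lawVY kVb kYb x u) ((\<lambda>t. (z, u, t)) -` A) + H u"
    and iH: "(\<integral>\<^sup>+u. H u \<partial>unif01) \<le> ennreal e"
  shows "emeasure (lawX muZ kVa kYa x) A \<le> emeasure (lawX muZ kVb kYb x) A + ennreal e"
proof -
  have inner: "emeasure (KZ kVa kYa x z) A \<le> emeasure (KZ kVb kYb x z) A + ennreal e" for z
  proof -
    define F2 where "F2 u = emeasure (lawVY kVb kYb x u) ((\<lambda>t. (z, u, t)) -` A)" for u
    have F2e: "F2 u = emeasure (distr (lawVY kVb kYb x u) borel (\<lambda>t. (z, u, t))) A" for u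
      unfolding F2_def by (rule slice_eq[where kV=kVb and kY=kYb and x=x, OF LV2 A, symmetric])
    have F2m: "F2 \<in> borel_measurable borel"
      unfolding F2e by (rule emeas_k[OF Dz_meas[where kV=kVb and kY=kYb and x=x, OF LV2] A])
    have F2m': "F2 \<in> borel_measurable unif01"
      by (subst measurable_cong_sets[OF sets_unif01 refl]) (rule F2m)
    have Hm': "H \<in> borel_measurable unif01"
      by (subst measurable_cong_sets[OF sets_unif01 refl]) (rule H)
    have "emeasure (KZ kVa kYa x z) A = (\<integral>\<^sup>+u. emeasure (lawVY kVa kYa x u) ((\<lambda>t. (z, u, t)) -` A) \<partial>unif01)"
      by (rule emeasure_KZ[where kV=kVa and kY=kYa and x=x, OF LV1 A])
    also have "\<dots> \<le> (\<integral>\<^sup>+u. F2 u + H u \<partial>unif01)"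
      unfolding F2_def by (rule nn_integral_mono) (rule pw)
    also have "\<dots> = (\<integral>\<^sup>+u. F2 u \<partial>unif01) + (\<integral>\<^sup>+u. H u \<partial>unif01)"
      by (rule nn_integral_add[OF F2m' Hm'])
    also have "(\<integral>\<^sup>+u. F2 u \<partial>unif01) = emeasure (KZ kVb kYb x z) A"
      unfolding F2_def by (rule emeasure_KZ[where kV=kVb and kY=kYb and x=x, OF LV2 A, symmetric])
    finally show ?thesis using iH by (meson add_left_mono order_trans)
  qed
  have sk: "sets (muZ x) = sets borel" using muZ by (simp add: space_prob_algebra)
  have Km: "(\<lambda>z. emeasure (KZ kVb kYb x z) A) \<in> borel_measurable (muZ x)"
    by (subst measurable_cong_sets[OF sk refl]) (rule emeas_k[OF KZ_meas[where kV=kVb and kY=kYb and x=x, OF LV2] A])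
  have one: "emeasure (muZ x) (space (muZ x)) = 1"
  proof -
    interpret prob_space "muZ x" using muZ by (simp add: space_prob_algebra)
    show ?thesis by (rule emeasure_space_1)
  qed
  have "emeasure (lawX muZ kVa kYa x) A = (\<integral>\<^sup>+z. emeasure (KZ kVa kYa x z) A \<partial>muZ x)"
    by (rule emeasure_lawX[where muZ=muZ and kV=kVa and kY=kYa and x=x, OF muZ LV1 A])
  also have "\<dots> \<le> (\<integral>\<^sup>+z. emeasure (KZ kVb kYb x z) A + ennreal e \<partial>muZ x)"
    by (rule nn_integral_mono) (rule inner)
  also have "\<dots> = (\<integral>\<^sup>+z. emeasure (KZ kVb kYb x z) A \<partial>muZ x) + ennreal e"
    by (subst nn_integral_add[OF Km]) (simp_all add: one)
  also have "(\<integral>\<^sup>+z. emeasure (KZ kVb kYb x z) A \<partial>muZ x) = emeasure (lawX muZ kVb kYb x) A"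
    by (rule emeasure_lawX[where muZ=muZ and kV=kVb and kY=kYb and x=x, OF muZ LV2 A, symmetric])
  finally show ?thesis .
qed

lemma kV_out_null:
  assumes muZ: "muZ x \<in> space (prob_algebra borel)"
    and LV: "(\<lambda>u. lawVY kV kY x u) \<in> borel \<rightarrow>\<^sub>M prob_algebra borel"
    and kin: "\<And>u. kV x u \<in> space (prob_algebra borel)"
    and kY: "\<And>u. kY x u \<in> (borel :: real measure) \<rightarrow>\<^sub>M prob_algebra (borel :: (real \<times> real) measure)"
    and V: "distr (lawX muZ kV kY x) borel Vof = unif01"
  shows "(\<integral>\<^sup>+u. emeasure (kV x u) (- {0..1}) \<partial>unif01) = 0"
proof -
  define I where "I = (\<integral>\<^sup>+u. emeasure (kV x u) (- {0..1}) \<partial>unif01)"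
  have Vm: "Vof \<in> (borel :: (real \<times> real \<times> real \<times> real \<times> real) measure) \<rightarrow>\<^sub>M (borel :: real measure)"
  proof -
    have "continuous_on UNIV (\<lambda>w::real \<times> real \<times> real \<times> real \<times> real. fst (snd (snd w)))"
      by (intro continuous_intros)
    then show ?thesis unfolding Vof_def[abs_def] by (rule borel_measurable_continuous_onI)
  qed
  have O: "- {0..1::real} \<in> sets borel" by simp
  have A0: "Vof -` (- {0..1}) \<in> sets (borel :: (real \<times> real \<times> real \<times> real \<times> real) measure)"
    using measurable_sets[OF Vm O] by simp
  have lin: "lawX muZ kV kY x \<in> space (prob_algebra borel)" by (rule lawX_in_space[where muZ=muZ and kV=kV and kY=kY and x=x, OF muZ LV])
  have "emeasure (lawX muZ kV kY x) (Vof -` (- {0..1})) = emeasure unif01 (- {0..1})"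
    using emeasure_distr_k(1)[OF lin Vm O] V by simp
  also have "\<dots> = 0" by (simp add: emeasure_unif01)
  finally have z: "emeasure (lawX muZ kV kY x) (Vof -` (- {0..1})) = 0" .
  have "emeasure (lawX muZ kV kY x) (Vof -` (- {0..1})) = (\<integral>\<^sup>+z. emeasure (KZ kV kY x z) (Vof -` (- {0..1})) \<partial>muZ x)"
    by (rule emeasure_lawX[where muZ=muZ and kV=kV and kY=kY and x=x, OF muZ LV A0])
  also have "\<dots> = (\<integral>\<^sup>+z. I \<partial>muZ x)"
  proof (rule nn_integral_cong)
    fix z
    have "emeasure (KZ kV kY x z) (Vof -` (- {0..1})) = (\<integral>\<^sup>+u. emeasure (lawVY kV kY x u) ((\<lambda>t. (z, u, t)) -` (Vof -` (- {0..1}))) \<partial>unif01)"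
      by (rule emeasure_KZ[where kV=kV and kY=kY and x=x, OF LV A0])
    also have "\<dots> = I"
      unfolding I_def
    proof (rule nn_integral_cong)
      fix u
      have "(\<lambda>t. (z, u, t)) -` (Vof -` (- {0..1})) = (- {0..1}) \<times> UNIV" by (auto simp: Vof_def)
      then show "emeasure (lawVY kV kY x u) ((\<lambda>t. (z, u, t)) -` (Vof -` (- {0..1}))) = emeasure (kV x u) (- {0..1})"
        using emeasure_lawVY_fst[where kV=kV and kY=kY and x=x and u=u, OF kin kY O] by simp
    qed
    finally show "emeasure (KZ kV kY x z) (Vof -` (- {0..1})) = I" .
  qed
  also have "\<dots> = I"
  proof -
    interpret prob_space "muZ x" using muZ by (simp add: space_prob_algebra)
    show ?thesis using emeasure_space_1 by simp
  qed
  finally show ?thesis using z unfolding I_def by simp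
qed

lemma unif01_bump:
  assumes h: "h > 0"
  shows "emeasure unif01 {c - h<..<c + h} \<le> ennreal (2 * h)"
proof -
  have "emeasure unif01 {c - h<..<c + h} = emeasure lborel ({0..1} \<inter> {c - h<..<c + h})"
    by (rule emeasure_unif01) simp
  also have "\<dots> \<le> emeasure lborel {c - h<..<c + h}" by (rule emeasure_mono) auto
  also have "\<dots> = ennreal (2 * h)" using h by simp
  finally show ?thesis .
qed

lemma real_close:
  assumes M1: "M1 \<in> space (prob_algebra N)" and M2: "M2 \<in> space (prob_algebra N)"
    and e: "e \<ge> 0"
    and le1: "emeasure M1 A \<le> emeasure M2 A + ennreal e"
    and le2: "emeasure M2 A \<le> emeasure M1 A + ennreal e"
  shows "\<bar>measure M1 A - measure M2 A\<bar> \<le> e"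
proof -
  interpret a: prob_space M1 using M1 by (simp add: space_prob_algebra)
  interpret b: prob_space M2 using M2 by (simp add: space_prob_algebra)
  have l1: "ennreal (measure M1 A) \<le> ennreal (measure M2 A) + ennreal e"
    using le1 by (simp add: a.emeasure_eq_measure b.emeasure_eq_measure)
  have 1: "measure M1 A \<le> measure M2 A + e"
    using ennreal_le_iff[of "measure M2 A + e" "measure M1 A"] l1 e by simp
  have l2: "ennreal (measure M2 A) \<le> ennreal (measure M1 A) + ennreal e"
    using le2 by (simp add: a.emeasure_eq_measure b.emeasure_eq_measure)
  have 2: "measure M2 A \<le> measure M1 A + e"
    using ennreal_le_iff[of "measure M1 A + e" "measure M2 A"] l2 e by simp
  show ?thesis using 1 2 by linarith
qed



lemma cdfset_meas:
  assumes P: "P x \<in> borel_measurable borel"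
  shows "{w. Yobs P Q x w \<le> y \<and> Dobs P x w \<le> d \<and> Sobs P Q x w \<le> s \<and> Zof w \<le> z} \<in> sets (borel :: (real \<times> real \<times> real \<times> real \<times> real) measure)"
proof -
  have Zm: "Zof \<in> borel_measurable (borel :: (real \<times> real \<times> real \<times> real \<times> real) measure)"
    unfolding Zof_def[abs_def] by (rule borel_measurable_continuous_onI) (intro continuous_intros)
  have Um: "Uof \<in> borel_measurable (borel :: (real \<times> real \<times> real \<times> real \<times> real) measure)"
    unfolding Uof_def[abs_def] by (rule borel_measurable_continuous_onI) (intro continuous_intros)
  have Vm: "Vof \<in> borel_measurable (borel :: (real \<times> real \<times> real \<times> real \<times> real) measure)"
    unfolding Vof_def[abs_def] by (rule borel_measurable_continuous_onI) (intro continuous_intros)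
  have Y0: "(\<lambda>w. fst (snd (snd (snd w)))) \<in> borel_measurable (borel :: (real \<times> real \<times> real \<times> real \<times> real) measure)"
    by (rule borel_measurable_continuous_onI) (intro continuous_intros)
  have Y1: "(\<lambda>w. snd (snd (snd (snd w)))) \<in> borel_measurable (borel :: (real \<times> real \<times> real \<times> real \<times> real) measure)"
    by (rule borel_measurable_continuous_onI) (intro continuous_intros)
  have Ym: "Ystar k \<in> borel_measurable (borel :: (real \<times> real \<times> real \<times> real \<times> real) measure)" for k
    unfolding Ystar_def[abs_def] using Y0 Y1 by (cases "k = 1") simp_all
  have PZ: "(\<lambda>w. P x (Zof w)) \<in> borel_measurable (borel :: (real \<times> real \<times> real \<times> real \<times> real) measure)"
    by (rule measurable_compose[OF Zm P])
  have Dm: "Dobs P x \<in> borel_measurable (borel :: (real \<times> real \<times> real \<times> real \<times> real) measure)"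
    unfolding Dobs_def[abs_def] using PZ Um by measurable
  have Sdm: "Sd Q k x \<in> borel_measurable (borel :: (real \<times> real \<times> real \<times> real \<times> real) measure)" for k
    unfolding Sd_def[abs_def] using Vm by measurable
  have Sm: "Sobs P Q x \<in> borel_measurable (borel :: (real \<times> real \<times> real \<times> real \<times> real) measure)"
    unfolding Sobs_def[abs_def] using Dm Sdm by measurable
  have Ydm: "Yd Q k x \<in> borel_measurable (borel :: (real \<times> real \<times> real \<times> real \<times> real) measure)" for k
    unfolding Yd_def[abs_def] using Sdm Ym by measurable
  have Yom: "Yobs P Q x \<in> borel_measurable (borel :: (real \<times> real \<times> real \<times> real \<times> real) measure)"
    unfolding Yobs_def[abs_def] using Dm Ydm by measurable
  show ?thesis using Yom Dm Sm Zm by measurable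
qed



lemma pw_bound:
  assumes h: "h > 0"
    and kin: "kV x u \<in> space (prob_algebra borel)"
    and kY: "kY x u \<in> (borel :: real measure) \<rightarrow>\<^sub>M prob_algebra (borel :: (real \<times> real) measure)"
    and kvm: "kVm h c kV x u \<in> space (prob_algebra borel)"
    and kym: "kYm h c d kY x u \<in> (borel :: real measure) \<rightarrow>\<^sub>M prob_algebra (borel :: (real \<times> real) measure)"
    and S: "S \<in> sets (borel :: (real \<times> real \<times> real) measure)"
  shows "emeasure (lawVY (kVm h c kV) (kYm h c d kY) x u) S \<le> emeasure (lawVY kV kY x u) S + (indicator {c - h<..<c + h} u + emeasure (kV x u) (- {0..1}))"
    and "emeasure (lawVY kV kY x u) S \<le> emeasure (lawVY (kVm h c kV) (kYm h c d kY) x u) S + (indicator {c - h<..<c + h} u + emeasure (kV x u) (- {0..1}))"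
proof -
  have l1: "lawVY (kVm h c kV) (kYm h c d kY) x u \<in> space (prob_algebra borel)"
    by (rule lawVY_in_space[where kV="kVm h c kV" and kY="kYm h c d kY", OF kvm kym])
  have l2: "lawVY kV kY x u \<in> space (prob_algebra borel)"
    by (rule lawVY_in_space[where kV=kV and kY=kY, OF kin kY])
  have "emeasure (lawVY (kVm h c kV) (kYm h c d kY) x u) S \<le> emeasure (lawVY kV kY x u) S + (indicator {c - h<..<c + h} u + emeasure (kV x u) (- {0..1}))
      \<and> emeasure (lawVY kV kY x u) S \<le> emeasure (lawVY (kVm h c kV) (kYm h c d kY) x u) S + (indicator {c - h<..<c + h} u + emeasure (kV x u) (- {0..1}))"
  proof (cases "bump h c u = 0")
    case True
    note cb = clamp_bound[where d=d and kV=kV and kY=kY and x=x and u=u and h=h and c=c, OF h True kin kY S]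
    have m: "a \<le> b + k \<Longrightarrow> a \<le> b + (i + k)" for a b k i :: ennreal
      by (metis add.left_commute add_increasing order_trans zero_le le_iff_add)
    show ?thesis using cb by (auto intro: m)
  next
    case False
    then have "u \<in> {c - h<..<c + h}" by (rule bump_nz[OF h])
    then have i1: "indicator {c - h<..<c + h} u = (1::ennreal)" by simp
    have g: "a \<le> 1 \<Longrightarrow> a \<le> b + (1 + k)" for a b k :: ennreal
      by (metis add.commute add.left_commute add_increasing le_iff_add order_trans zero_le)
    show ?thesis unfolding i1
      using emeasure_le_1_k[OF l1, of S] emeasure_le_1_k[OF l2, of S] by (auto intro: g)
  qed
  then show "emeasure (lawVY (kVm h c kV) (kYm h c d kY) x u) S \<le> emeasure (lawVY kV kY x u) S + (indicator {c - h<..<c + h} u + emeasure (kV x u) (- {0..1}))"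
    and "emeasure (lawVY kV kY x u) S \<le> emeasure (lawVY (kVm h c kV) (kYm h c d kY) x u) S + (indicator {c - h<..<c + h} u + emeasure (kV x u) (- {0..1}))"
    by auto
qed

theorem propositionG2:
  fixes muX :: "'x measure"
    and XX :: "'x set" and ZZ :: "real set"
    and muZ :: "'x \<Rightarrow> real measure"
    and kV :: "'x \<Rightarrow> real \<Rightarrow> real measure"
    and kY :: "'x \<Rightarrow> real \<Rightarrow> real \<Rightarrow> (real \<times> real) measure"
    and P :: "'x \<Rightarrow> real \<Rightarrow> real"
    and Q :: "nat \<Rightarrow> 'x \<Rightarrow> real"
    and eps :: real and ubar :: real and xbar :: 'x and delta :: real
  assumes muX: "prob_space muX"
    and XX: "XX \<subseteq> space muX" "AE x in muX. x \<in> XX"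
    and muZ_kernel: "muZ \<in> muX \<rightarrow>\<^sub>M prob_algebra borel"
    and kV_kernel: "(\<lambda>(x, u). kV x u) \<in> muX \<Otimes>\<^sub>M borel \<rightarrow>\<^sub>M prob_algebra borel"
    and kY_kernel: "(\<lambda>(x, u, v). kY x u v) \<in> muX \<Otimes>\<^sub>M (borel \<Otimes>\<^sub>M borel) \<rightarrow>\<^sub>M prob_algebra borel"
    and ZZ: "\<forall>x\<in>XX. AE z in muZ x. z \<in> ZZ"
    and P_meas: "\<forall>x. P x \<in> borel_measurable borel"
    and P_range: "\<forall>x\<in>XX. \<forall>z\<in>ZZ. 0 \<le> P x z \<and> P x z \<le> 1"
    and Q_range: "\<forall>d\<in>{0,1}. \<forall>x\<in>XX. 0 \<le> Q d x \<and> Q d x \<le> 1"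
    \<comment> \<open>V | X is Uniform[0,1]; (U,V) | X jointly continuously distributed\<close>
    and V_unif: "\<forall>x\<in>XX. distr (lawX muZ kV kY x) borel Vof = unif01"
    and UV_cont: "\<forall>x\<in>XX. has_lebesgue_density (distr (lawX muZ kV kY x) borel (\<lambda>w. (Uof w, Vof w)))"
    \<comment> \<open>(A2)\<close>
    and A2: "\<forall>x\<in>XX. \<not> (\<exists>c. AE z in muZ x. P x z = c)"
    \<comment> \<open>(A3)\<close>
    and A3: "\<forall>d\<in>{0,1}. (\<integral>\<^sup>+x. (\<integral>\<^sup>+w. ennreal \<bar>Ystar d w\<bar> \<partial>lawX muZ kV kY x) \<partial>muX) < \<infinity>
                     \<and> (\<integral>\<^sup>+x. (\<integral>\<^sup>+w. ennreal ((Ystar d w)\<^sup>2) \<partial>lawX muZ kV kY x) \<partial>muX) < \<infinity>"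
    \<comment> \<open>(A4)\<close>
    and A4: "\<forall>x\<in>XX. 0 < measure (lawX muZ kV kY x) {w. Dobs P x w = 1}
                   \<and> measure (lawX muZ kV kY x) {w. Dobs P x w = 1} < 1"
    \<comment> \<open>(A6) with common support \<Y>* = \<real>\<close>
    and A6: "\<forall>d\<in>{0,1}. msupport (lawYstar muX muZ kV kY d) = UNIV"
    \<comment> \<open>(A8)\<close>
    and A8: "\<forall>x\<in>XX. Q 1 x > Q 0 x \<and> Q 0 x > 0"
    \<comment> \<open>(A10)\<close>
    and A10V: "\<forall>x\<in>XX. \<forall>v. continuous_on {0..1} (\<lambda>u. measure (kV x u) {..v})"
    and A10Y: "\<forall>x\<in>XX. \<forall>v y0 y1. continuous_on {0..1} (\<lambda>u. measure (kY x u v) ({..y0} \<times> {..y1}))"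
    \<comment> \<open>the data of the proposition\<close>
    and eps: "eps > 0"
    and ubar: "ubar \<in> {0..1}"
    and xbar: "xbar \<in> XX"
  shows "\<exists>kV' :: 'x \<Rightarrow> real \<Rightarrow> real measure. \<exists>kY' :: 'x \<Rightarrow> real \<Rightarrow> real \<Rightarrow> (real \<times> real) measure.
      (\<lambda>(x, u). kV' x u) \<in> muX \<Otimes>\<^sub>M borel \<rightarrow>\<^sub>M prob_algebra borel
    \<and> (\<lambda>(x, u, v). kY' x u v) \<in> muX \<Otimes>\<^sub>M (borel \<Otimes>\<^sub>M borel) \<rightarrow>\<^sub>M prob_algebra borel
    \<comment> \<open>(1)\<close>
    \<and> (let L = lawVY kV' kY' xbar ubar;
           E = {(v, y0, y1). Q 0 xbar \<ge> v \<and> Q 1 xbar \<ge> v};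
           g = (\<lambda>(v, y0, y1). y1 - y0)
       in measure L E > 0 \<and> integrable (uniform_measure L E) g
          \<and> (\<integral>w. g w \<partial>uniform_measure L E) = delta)
    \<comment> \<open>(2)\<close>
    \<and> (\<forall>u\<in>{0..1}. measure (lawVY kV' kY' xbar u)
          {(v, y0, y1). (y0, y1, v) \<in> (UNIV :: real set) \<times> (UNIV :: real set) \<times> {0..1}} = 1)
    \<comment> \<open>(3)\<close>
    \<and> (\<forall>x\<in>XX. \<forall>v. continuous_on {0..1} (\<lambda>u. measure (kV' x u) {..v}))
    \<comment> \<open>(4)\<close>
    \<and> (\<forall>x\<in>XX. \<forall>v y0 y1. continuous_on {0..1} (\<lambda>u. measure (kY' x u v) ({..y0} \<times> {..y1})))
    \<comment> \<open>(5)\<close>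
    \<and> (\<forall>y d s z. \<bar>cdfYDSZ P Q muZ kV' kY' xbar y d s z - cdfYDSZ P Q muZ kV kY xbar y d s z\<bar> \<le> eps)"
  proof -
  define h where "h = eps / 2"
  have h: "h > 0" using eps by (simp add: h_def)
  define kV' where "kV' = kVm h ubar kV"
  define kY' where "kY' = kYm h ubar delta kY"
  have xs: "xbar \<in> space muX" using XX xbar by auto
  have kV'_kernel: "(\<lambda>(x, u). kV' x u) \<in> muX \<Otimes>\<^sub>M borel \<rightarrow>\<^sub>M prob_algebra borel"
    unfolding kV'_def by (rule kVm_kernel[OF kV_kernel])
  have kY'_kernel: "(\<lambda>(x, u, v). kY' x u v) \<in> muX \<Otimes>\<^sub>M (borel \<Otimes>\<^sub>M borel) \<rightarrow>\<^sub>M prob_algebra borel"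
    unfolding kY'_def by (rule kYm_kernel[OF kY_kernel])
  have kVx: "kV x \<in> (borel :: real measure) \<rightarrow>\<^sub>M prob_algebra borel" if "x \<in> space muX" for x
    by (rule sec2[OF kV_kernel that])
  have kV'x: "kV' x \<in> (borel :: real measure) \<rightarrow>\<^sub>M prob_algebra borel" if "x \<in> space muX" for x
    by (rule sec2[OF kV'_kernel that])
  have kYx2: "(\<lambda>(u, v). kY x u v) \<in> (borel :: real measure) \<Otimes>\<^sub>M (borel :: real measure) \<rightarrow>\<^sub>M prob_algebra borel" if "x \<in> space muX" for x
    by (rule sec3(1)[OF kY_kernel that])
  have kY'x2: "(\<lambda>(u, v). kY' x u v) \<in> (borel :: real measure) \<Otimes>\<^sub>M (borel :: real measure) \<rightarrow>\<^sub>M prob_algebra borel" if "x \<in> space muX" for x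
    by (rule sec3(1)[OF kY'_kernel that])
  have kYxu: "kY x u \<in> (borel :: real measure) \<rightarrow>\<^sub>M prob_algebra borel" if "x \<in> space muX" for x u
    by (rule sec3(2)[OF kY_kernel that])
  have kY'xu: "kY' x u \<in> (borel :: real measure) \<rightarrow>\<^sub>M prob_algebra borel" if "x \<in> space muX" for x u
    by (rule sec3(2)[OF kY'_kernel that])
  have kin: "kV x u \<in> space (prob_algebra borel)" if "x \<in> space muX" for x u
    using measurable_space[OF kVx[OF that]] by simp
  have kin': "kV' x u \<in> space (prob_algebra borel)" if "x \<in> space muX" for x u
    using measurable_space[OF kV'x[OF that]] by simp
  have kyin: "kY x u v \<in> space (prob_algebra borel)" if "x \<in> space muX" for x u v
    using measurable_space[OF kYxu[OF that]] by simp
  have muZx: "muZ xbar \<in> space (prob_algebra borel)" using measurable_space[OF muZ_kernel xs] .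
  have LV: "(\<lambda>u. lawVY kV kY xbar u) \<in> borel \<rightarrow>\<^sub>M prob_algebra borel"
    by (rule lawVY_meas[where kV=kV and kY=kY, OF kVx[OF xs] kYx2[OF xs]])
  have LV': "(\<lambda>u. lawVY kV' kY' xbar u) \<in> borel \<rightarrow>\<^sub>M prob_algebra borel"
    by (rule lawVY_meas[where kV=kV' and kY=kY', OF kV'x[OF xs] kY'x2[OF xs]])
  have Q: "0 < Q 0 xbar" "Q 0 xbar \<le> Q 1 xbar" "Q 0 xbar \<le> 1"
    using A8 Q_range xbar by force+
  have P1: "let L = lawVY kV' kY' xbar ubar;
           E = {(v, y0, y1). Q 0 xbar \<ge> v \<and> Q 1 xbar \<ge> v};
           g = (\<lambda>(v, y0, y1). y1 - y0)
       in measure L E > 0 \<and> integrable (uniform_measure L E) g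
          \<and> (\<integral>w. g w \<partial>uniform_measure L E) = delta"
    unfolding kV'_def kY'_def lawVY_at_c[where h=h and c=ubar and kV=kV and kY=kY and x=xbar and d=delta, OF h kin[OF xs] kyin[OF xs]]
    by (rule part1[OF Q])
  have P2: "\<forall>u\<in>{0..1}. measure (lawVY kV' kY' xbar u)
          {(v, y0, y1). (y0, y1, v) \<in> (UNIV :: real set) \<times> (UNIV :: real set) \<times> {0..1}} = 1"
  proof
    fix u :: real
    have e: "{(v, y0, y1). (y0, y1, v) \<in> (UNIV :: real set) \<times> (UNIV :: real set) \<times> {0..1}} = {0..1::real} \<times> (UNIV :: (real \<times> real) set)"
      by auto
    show "measure (lawVY kV' kY' xbar u)
          {(v, y0, y1). (y0, y1, v) \<in> (UNIV :: real set) \<times> (UNIV :: real set) \<times> {0..1}} = 1"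
      unfolding e kV'_def kY'_def
      by (rule part2[where h=h and c=ubar and d=delta and kV=kV and kY=kY and x=xbar and u=u, OF h kin[OF xs]]) (use kY'xu[OF xs] in \<open>simp add: kY'_def\<close>)
  qed
  have P3: "\<forall>x\<in>XX. \<forall>v. continuous_on {0..1} (\<lambda>u. measure (kV' x u) {..v})"
  proof (intro ballI allI)
    fix x v assume x: "x \<in> XX"
    then have xs': "x \<in> space muX" using XX by auto
    show "continuous_on {0..1} (\<lambda>u. measure (kV' x u) {..v})"
      unfolding kV'_def by (rule kVm_cont[where h=h and c=ubar and kV=kV and x=x, OF h kVx[OF xs']]) (use A10V x in simp)
  qed
  have P4: "\<forall>x\<in>XX. \<forall>v y0 y1. continuous_on {0..1} (\<lambda>u. measure (kY' x u v) ({..y0} \<times> {..y1}))"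
  proof (intro ballI allI)
    fix x v y0 y1 assume x: "x \<in> XX"
    then have xs': "x \<in> space muX" using XX by auto
    show "continuous_on {0..1} (\<lambda>u. measure (kY' x u v) ({..y0} \<times> {..y1}))"
      unfolding kY'_def by (rule kYm_cont[where h=h and c=ubar and d=delta and kY=kY and x=x and v=v, OF h kYxu[OF xs'] kyin[OF xs']]) (use A10Y x in simp)
  qed
  have P5: "\<forall>y d s z. \<bar>cdfYDSZ P Q muZ kV' kY' xbar y d s z - cdfYDSZ P Q muZ kV kY xbar y d s z\<bar> \<le> eps"
  proof (intro allI)
    fix y d s z
    define A where "A = {w. Yobs P Q xbar w \<le> y \<and> Dobs P xbar w \<le> d \<and> Sobs P Q xbar w \<le> s \<and> Zof w \<le> z}"
    have As: "A \<in> sets borel" unfolding A_def by (rule cdfset_meas) (use P_meas in simp)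
    define H where "H u = indicator {ubar - h<..<ubar + h} u + emeasure (kV xbar u) (- {0..1})" for u
    have O: "- {0..1::real} \<in> sets borel" by simp
    have Hm: "H \<in> borel_measurable borel"
      unfolding H_def[abs_def] using emeas_k[OF kVx[OF xs] O] by measurable
    have iH: "(\<integral>\<^sup>+u. H u \<partial>unif01) \<le> ennreal eps"
    proof -
      have Im: "indicator {ubar - h<..<ubar + h} \<in> borel_measurable unif01" by simp
      have Km: "(\<lambda>u. emeasure (kV xbar u) (- {0..1})) \<in> borel_measurable unif01"
        by (subst measurable_cong_sets[OF sets_unif01 refl]) (rule emeas_k[OF kVx[OF xs] O])
      have "(\<integral>\<^sup>+u. H u \<partial>unif01) = emeasure unif01 {ubar - h<..<ubar + h} + (\<integral>\<^sup>+u. emeasure (kV xbar u) (- {0..1}) \<partial>unif01)"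
        unfolding H_def by (subst nn_integral_add[OF Im Km]) simp
      also have "(\<integral>\<^sup>+u. emeasure (kV xbar u) (- {0..1}) \<partial>unif01) = 0"
        by (rule kV_out_null[where muZ=muZ and kV=kV and kY=kY and x=xbar, OF muZx LV kin[OF xs] kYxu[OF xs]])
           (use V_unif xbar in simp)
      also have "emeasure unif01 {ubar - h<..<ubar + h} + 0 \<le> ennreal (2 * h)"
        using unif01_bump[OF h, of ubar] by simp
      finally show ?thesis by (simp add: h_def)
    qed
    have pw1: "emeasure (lawVY kV' kY' xbar u) ((\<lambda>t. (z', u, t)) -` A) \<le> emeasure (lawVY kV kY xbar u) ((\<lambda>t. (z', u, t)) -` A) + H u"
      and pw2: "emeasure (lawVY kV kY xbar u) ((\<lambda>t. (z', u, t)) -` A) \<le> emeasure (lawVY kV' kY' xbar u) ((\<lambda>t. (z', u, t)) -` A) + H u"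
      for z' u
    proof -
      have m0: "(\<lambda>t. (z', u, t)) \<in> (borel :: (real \<times> real \<times> real) measure) \<rightarrow>\<^sub>M (borel :: (real \<times> real \<times> real \<times> real \<times> real) measure)"
        by measurable
      have Ss: "(\<lambda>t. (z', u, t)) -` A \<in> sets borel"
        using measurable_sets[OF m0 As] by simp
      have kvm: "kVm h ubar kV xbar u \<in> space (prob_algebra borel)" using kin'[OF xs] by (simp add: kV'_def)
      have kym: "kYm h ubar delta kY xbar u \<in> borel \<rightarrow>\<^sub>M prob_algebra borel" using kY'xu[OF xs] by (simp add: kY'_def)
      note b = pw_bound[where h=h and c=ubar and d=delta and kV=kV and kY=kY and x=xbar and u=u, OF h kin[OF xs] kYxu[OF xs] kvm kym Ss]
      show "emeasure (lawVY kV' kY' xbar u) ((\<lambda>t. (z', u, t)) -` A) \<le> emeasure (lawVY kV kY xbar u) ((\<lambda>t. (z', u, t)) -` A) + H u"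
        using b(1) unfolding H_def kV'_def kY'_def .
      show "emeasure (lawVY kV kY xbar u) ((\<lambda>t. (z', u, t)) -` A) \<le> emeasure (lawVY kV' kY' xbar u) ((\<lambda>t. (z', u, t)) -` A) + H u"
        using b(2) unfolding H_def kV'_def kY'_def .
    qed
    have le1: "emeasure (lawX muZ kV' kY' xbar) A \<le> emeasure (lawX muZ kV kY xbar) A + ennreal eps"
      by (rule cdf_bound[where muZ=muZ and kVa=kV' and kYa=kY' and kVb=kV and kYb=kY and x=xbar, OF muZx LV' LV As Hm pw1 iH])
    have le2: "emeasure (lawX muZ kV kY xbar) A \<le> emeasure (lawX muZ kV' kY' xbar) A + ennreal eps"
      by (rule cdf_bound[where muZ=muZ and kVa=kV and kYa=kY and kVb=kV' and kYb=kY' and x=xbar, OF muZx LV LV' As Hm pw2 iH])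
    have in1: "lawX muZ kV' kY' xbar \<in> space (prob_algebra borel)"
      by (rule lawX_in_space[where muZ=muZ and kV=kV' and kY=kY' and x=xbar, OF muZx LV'])
    have in2: "lawX muZ kV kY xbar \<in> space (prob_algebra borel)"
      by (rule lawX_in_space[where muZ=muZ and kV=kV and kY=kY and x=xbar, OF muZx LV])
    show "\<bar>cdfYDSZ P Q muZ kV' kY' xbar y d s z - cdfYDSZ P Q muZ kV kY xbar y d s z\<bar> \<le> eps"
      unfolding cdfYDSZ_def A_def[symmetric]
      by (rule real_close[OF in1 in2 _ le1 le2]) (use eps in simp)
  qed
  show ?thesis
    by (rule exI[of _ kV'], rule exI[of _ kY']) (use kV'_kernel kY'_kernel P1 P2 P3 P4 P5 in blast)
qed


end
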